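(* Consider the distributed associative memory setting described in the context, with agents running the DAM-TOGD update with learning rate $\eta_{n,t}=c/\sqrt{t-\tau_{n,\min}}$ for some constant $c>0$. Then $$\mathrm{Reg}(T)\le\sum_{n\in\mathcal{N}}\Big(2cQ_n\sqrt{T+\Delta\tau_n}+\frac{B^2}{2c}\sqrt{T}+P_n c + C_n\Big),$$ so that $\mathrm{Reg}(T)=\mathcal{O}\big(\sqrt{T+\Delta\tau_n}+\sqrt{T}\big)$, where $Q_n = \frac{K_n}{2}\sum_{m\in\mathcal{W}_n} L_m + |\mathcal{W}_n|\, K_n^2 \sum_{m\in\mathcal{W}_n}\tau_{n,m}$, $P_n = |\mathcal{W}_n|^2 K_n^2\,\tau_{n,\max}^2$, $C_n = \frac{\Delta\tau_n}{2}\big( K_n\sum_{m\in\mathcal{W}_n} L_m + |\mathcal{W}_n|\, B^2\big)$, with $K_n = \max_{m\in\mathcal{W}_n} w_{n,m}L_m$, $\tau_{n,\min}=\min_{m\in\mathcal{W}_n}\tau_{n,m}$, $\tau_{n,\max}=\max_{m\in\mathcal{W}_n}\tau_{n,m}$, $\Delta\tau_n=\tau_{n,\max}-\tau_{n,\min}$, and $|\mathcal{W}_n|$ the cardinality of $\mathcal{W}_n$.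
   Context: There are $N$ agents indexed by $\mathcal{N}=\{1,\dots,N\}$. At each time $t=1,2,\dots$, agent $m$ has a convex loss function $f_{m,t}:\mathcal{X}\to\mathbb{R}$, which only agent $m$ can evaluate. The feasible set $\mathcal{X}$ (a set of matrices) is closed, convex and bounded with diameter $B$, and $\|\nabla f_{m,t}(\mathbf{X})\|_F\le L_m$ for all $m$, $t$ and $\mathbf{X}\in\mathcal{X}$, with finite $L_m>0$. Norms are Frobenius norms and $\Pi_{\mathcal{X}}$ denotes Euclidean (Frobenius) projection onto $\mathcal{X}$. A row-stochastic matrix $\mathbf{W}$ with entries $w_{n,m}\in[0,1]$, $\sum_m w_{n,m}=1$, is given; $\mathcal{W}_n=\{m\in\mathcal{N}: w_{n,m}>0\}$. Agent $n$ maintains iterates $\mathbf{X}_{n,t}\in\mathcal{X}$ and its cumulative loss is $\mathcal{L}_n^T(\mathbf{X}_n^T)=\sum_{t=1}^T\sum_{m\in\mathcal{W}_n} w_{n,m} f_{m,t}(\mathbf{X}_{n,t})$. Let $\mathbf{U}_n^*\in\arg\min_{\mathbf{U}\in\mathcal{X}}\sum_{t=1}^T\sum_{m\in\mathcal{W}_n} w_{n,m}f_{m,t}(\mathbf{U})$, and define the regret $\mathrm{Reg}(T)=\sum_{n\in\mathcal{N}}\big(\mathcal{L}_n^T(\mathbf{X}_n^T)-\mathcal{L}_n^T(\mathbf{U}_n^* )\big)$ (with $\mathcal{L}_n^T(\mathbf{U}_n^* )$ meaning the constant sequence $\mathbf{U}_n^*$). Agents communicate over a connected undirected graph $\mathcal{G}=(\mathcal{N},\mathcal{E})$.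 For each $n$, a Steiner tree $\mathcal{T}_n$ in $\mathcal{G}$ rooted at $n$ and containing paths from $n$ to every agent of $\mathcal{W}_n$ is fixed; $\tilde\tau_{n,m}$ is the number of edges on the path in $\mathcal{T}_n$ from $n$ to $m$ (so $\tilde\tau_{n,n}=0$), and $\tau_{n,m}=2\tilde\tau_{n,m}$ is the round-trip delay: each message takes one time step per edge, so agent $n$ obtains $\nabla f_{m,s}(\mathbf{X}_{n,s})$ at time $s+\tau_{n,m}$. DAM-TOGD: starting from an initial point $\mathbf{X}_{n,1}\in\mathcal{X}$, each agent $n$ updates, for $t\ge1$, $$\mathbf{X}_{n,t+1}=\Pi_{\mathcal{X}}\Big[\mathbf{X}_{n,t}-\eta_{n,t}\sum_{m\in\mathcal{W}_n} w_{n,m}\nabla f_{m,t-\tau_{n,m}}(\mathbf{X}_{n,t-\tau_{n,m}})\,\mathbb{1}_{\{t>\tau_{n,m}\}}\Big],$$ where $\eta_{n,t}>0$ is the learning rate. *)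

theory Defs
  imports "HOL-Analysis.Analysis"
begin

definition undirected_graph :: "('i \<times> 'i) set \<Rightarrow> bool" where
  "undirected_graph E \<longleftrightarrow> sym E \<and> irrefl E"

definition connected_graph :: "('i \<times> 'i) set \<Rightarrow> bool" where
  "connected_graph E \<longleftrightarrow> (\<forall>u v. (u, v) \<in> E\<^sup>*)"

text \<open>T (symmetric edge set, each undirected edge stored in both directions) is a tree
  of the graph E with vertex set V: a connected subgraph on V with |V| - 1 undirected edges.\<close>
definition tree_in :: "('i \<times> 'i) set \<Rightarrow> 'i set \<Rightarrow> ('i \<times> 'i) set \<Rightarrow> bool" where
  "tree_in E V T \<longleftrightarrow> T \<subseteq> E \<and> T \<subseteq> V \<times> V \<and> sym T \<and> finite V \<and> V \<noteq> {} \<and>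
     (\<forall>u\<in>V. \<forall>v\<in>V. (u, v) \<in> T\<^sup>*) \<and> card T = 2 * (card V - 1)"

definition steiner_tree :: "('i \<times> 'i) set \<Rightarrow> 'i \<Rightarrow> 'i set \<Rightarrow> 'i set \<Rightarrow> ('i \<times> 'i) set \<Rightarrow> bool" where
  "steiner_tree E n S V T \<longleftrightarrow> tree_in E V T \<and> n \<in> V \<and> S \<subseteq> V"

definition tree_dist :: "('i \<times> 'i) set \<Rightarrow> 'i \<Rightarrow> 'i \<Rightarrow> nat" where
  "tree_dist T u v = (LEAST k. (u, v) \<in> T ^^ k)"

definition Wset :: "('i \<Rightarrow> 'i \<Rightarrow> real) \<Rightarrow> 'i \<Rightarrow> 'i set" where
  "Wset w n = {m. w n m > 0}"

definition tau_min :: "('i \<Rightarrow> 'i \<Rightarrow> real) \<Rightarrow> ('i \<Rightarrow> 'i \<Rightarrow> nat) \<Rightarrow> 'i \<Rightarrow> nat" where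
  "tau_min w tau n = Min (tau n ` Wset w n)"

definition tau_max :: "('i \<Rightarrow> 'i \<Rightarrow> real) \<Rightarrow> ('i \<Rightarrow> 'i \<Rightarrow> nat) \<Rightarrow> 'i \<Rightarrow> nat" where
  "tau_max w tau n = Max (tau n ` Wset w n)"

definition delta_tau :: "('i \<Rightarrow> 'i \<Rightarrow> real) \<Rightarrow> ('i \<Rightarrow> 'i \<Rightarrow> nat) \<Rightarrow> 'i \<Rightarrow> nat" where
  "delta_tau w tau n = tau_max w tau n - tau_min w tau n"

definition K_const :: "('i \<Rightarrow> 'i \<Rightarrow> real) \<Rightarrow> ('i \<Rightarrow> real) \<Rightarrow> 'i \<Rightarrow> real" where
  "K_const w L n = Max ((\<lambda>m. w n m * L m) ` Wset w n)"

definition Q_const :: "('i \<Rightarrow> 'i \<Rightarrow> real) \<Rightarrow> ('i \<Rightarrow> real) \<Rightarrow> ('i \<Rightarrow> 'i \<Rightarrow> nat) \<Rightarrow> 'i \<Rightarrow> real" where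
  "Q_const w L tau n =
     K_const w L n / 2 * (\<Sum>m\<in>Wset w n. L m)
     + real (card (Wset w n)) * (K_const w L n)\<^sup>2 * (\<Sum>m\<in>Wset w n. real (tau n m))"

definition P_const :: "('i \<Rightarrow> 'i \<Rightarrow> real) \<Rightarrow> ('i \<Rightarrow> real) \<Rightarrow> ('i \<Rightarrow> 'i \<Rightarrow> nat) \<Rightarrow> 'i \<Rightarrow> real" where
  "P_const w L tau n =
     (real (card (Wset w n)))\<^sup>2 * (K_const w L n)\<^sup>2 * (real (tau_max w tau n))\<^sup>2"

definition C_const :: "('i \<Rightarrow> 'i \<Rightarrow> real) \<Rightarrow> ('i \<Rightarrow> real) \<Rightarrow> ('i \<Rightarrow> 'i \<Rightarrow> nat) \<Rightarrow> real \<Rightarrow> 'i \<Rightarrow> real" where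
  "C_const w L tau B n =
     real (delta_tau w tau n) / 2 *
       (K_const w L n * (\<Sum>m\<in>Wset w n. L m) + real (card (Wset w n)) * B\<^sup>2)"

definition cum_loss :: "('i \<Rightarrow> 'i \<Rightarrow> real) \<Rightarrow> ('i \<Rightarrow> nat \<Rightarrow> 'a \<Rightarrow> real) \<Rightarrow> nat \<Rightarrow> 'i \<Rightarrow> (nat \<Rightarrow> 'a) \<Rightarrow> real" where
  "cum_loss w f T n Y = (\<Sum>t=1..T. \<Sum>m\<in>Wset w n. w n m * f m t (Y t))"

definition regret :: "('i::finite \<Rightarrow> 'i \<Rightarrow> real) \<Rightarrow> ('i \<Rightarrow> nat \<Rightarrow> 'a \<Rightarrow> real) \<Rightarrow> nat
    \<Rightarrow> ('i \<Rightarrow> nat \<Rightarrow> 'a) \<Rightarrow> ('i \<Rightarrow> 'a) \<Rightarrow> real" where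
  "regret w f T X U = (\<Sum>n\<in>UNIV. cum_loss w f T n (X n) - cum_loss w f T n (\<lambda>_. U n))"

end

theory Submission
  imports Defs
begin


lemma convex_grad_ineq:
  fixes F :: "'a::real_inner \<Rightarrow> real"
  assumes cv: "convex_on S F" and xS: "x \<in> S" and uS: "u \<in> S"
    and der: "(F has_derivative (\<lambda>h. G \<bullet> h)) (at x)"
  shows "F x - F u \<le> G \<bullet> (x - u)"
proof -
  define v where "v = u - x"
  have d1: "((\<lambda>s::real. x + s *\<^sub>R v) has_derivative (\<lambda>s. s *\<^sub>R v)) (at 0)"
    by (auto intro!: derivative_eq_intros)
  have d2: "(F has_derivative (\<lambda>h. G \<bullet> h)) (at ((\<lambda>s::real. x + s *\<^sub>R v) 0))"
    using der by simp
  have "((\<lambda>s. F (x + s *\<^sub>R v)) has_derivative (\<lambda>s. G \<bullet> (s *\<^sub>R v))) (at 0)"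
    using has_derivative_compose[OF d1 d2] by simp
  moreover have "(\<lambda>s. G \<bullet> (s *\<^sub>R v)) = (*) (G \<bullet> v)"
    by (auto simp: inner_scaleR_right)
  ultimately have "((\<lambda>s. F (x + s *\<^sub>R v)) has_field_derivative (G \<bullet> v)) (at 0)"
    by (simp add: has_field_derivative_def)
  then have lim: "((\<lambda>s. (F (x + s *\<^sub>R v) - F x) / s) \<longlongrightarrow> G \<bullet> v) (at 0)"
    by (simp add: DERIV_def)
  have lim2: "((\<lambda>s. (F (x + s *\<^sub>R v) - F x) / s) \<longlongrightarrow> G \<bullet> v) (at_right 0)"
    by (rule tendsto_mono[OF at_le lim]) simp
  have ev: "eventually (\<lambda>s. (F (x + s *\<^sub>R v) - F x) / s \<le> F u - F x) (at_right (0::real))"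
    using eventually_at_right_real[of 0 1, OF zero_less_one]
  proof (rule eventually_mono)
    fix s :: real assume "s \<in> {0<..<1}"
    then have s0: "s > 0" and s1: "s < 1" by auto
    have eq: "x + s *\<^sub>R v = (1 - s) *\<^sub>R x + s *\<^sub>R u"
      by (simp add: v_def algebra_simps)
    have "F (x + s *\<^sub>R v) \<le> (1 - s) * F x + s * F u"
      unfolding eq using convex_onD[OF cv, of s x u] s0 s1 xS uS by simp
    then have "F (x + s *\<^sub>R v) - F x \<le> s * (F u - F x)" by (simp add: algebra_simps)
    then show "(F (x + s *\<^sub>R v) - F x) / s \<le> F u - F x"
      using s0 by (simp add: divide_le_eq mult.commute)
  qed
  have "G \<bullet> v \<le> F u - F x"
    by (rule tendsto_upperbound[OF lim2 ev]) simp
  then show ?thesis by (simp add: v_def inner_diff_right)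
qed

lemma sqrt_step: "2 * sqrt (real m) + 1 / sqrt (real m + 1) \<le> 2 * sqrt (real m + 1)"
proof -
  have p: "sqrt (real m + 1) > 0" by simp
  have "sqrt (real m) \<le> sqrt (real m + 1)" by simp
  then have "2 * sqrt (real m) * sqrt (real m + 1) + 1 \<le> 2 * (real m + 1)"
  proof -
    have "sqrt (real m) * sqrt (real m + 1) \<le> (real m + (real m + 1)) / 2"
      using arith_geo_mean_sqrt[of "real m" "real m + 1"] by (simp add: real_sqrt_mult)
    then show ?thesis by simp
  qed
  then have "(2 * sqrt (real m) + 1 / sqrt (real m + 1)) * sqrt (real m + 1) \<le> 2 * sqrt (real m + 1) * sqrt (real m + 1)"
    using p by (simp add: algebra_simps)
  then show ?thesis using p by (simp only: mult_le_cancel_right_pos)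
qed



lemma sum_Suc1: "(\<Sum>t=1..Suc N. f t) = (\<Sum>t=1..N. f t) + (f (Suc N) :: 'b::comm_monoid_add)"
  by (simp add: sum.cl_ivl_Suc)

lemma eta_sum:
  assumes c: "c \<ge> 0"
  shows "(\<Sum>t=1..N. if a < t then c / sqrt (real t - real a) else 0) \<le> 2 * c * sqrt (real (N - a))"
proof (induction N)
  case 0 then show ?case by simp
next
  case (Suc N)
  let ?f = "\<lambda>t. if a < t then c / sqrt (real t - real a) else 0"
  show ?case
  proof (cases "a < Suc N")
    case True
    then have aN: "a \<le> N" by simp
    have e1: "Suc N - a = Suc (N - a)" using aN by simp
    have e2: "real (Suc N) - real a = real (N - a) + 1" using aN by (simp add: of_nat_diff)
    have fS: "?f (Suc N) = c / sqrt (real (N - a) + 1)" using True by (simp only: e2 if_True)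
    have "sum ?f {1..Suc N} = sum ?f {1..N} + c / sqrt (real (N - a) + 1)"
      by (simp only: sum_Suc1 fS)
    also have "\<dots> \<le> 2 * c * sqrt (real (N - a)) + c / sqrt (real (N - a) + 1)"
      using Suc.IH by simp
    also have "\<dots> = c * (2 * sqrt (real (N - a)) + 1 / sqrt (real (N - a) + 1))" by (simp add: algebra_simps)
    also have "\<dots> \<le> c * (2 * sqrt (real (N - a) + 1))"
      by (rule mult_left_mono[OF sqrt_step c])
    also have "\<dots> = 2 * c * sqrt (real (Suc N - a))" using e1 by simp
    finally show ?thesis .
  next
    case False
    then have z: "Suc N - a = 0" "N - a = 0" by auto
    have fS: "?f (Suc N) = 0" using False by simp
    have "sum ?f {1..Suc N} = sum ?f {1..N}" by (simp only: sum_Suc1 fS add_0_right)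
    then show ?thesis using Suc.IH z by simp
  qed
qed



lemma telescope:
  fixes h D :: "nat \<Rightarrow> real"
  assumes hm: "\<And>k. h k \<le> h (Suc k)" and h0: "0 \<le> h 0" and Db: "\<And>k. k \<ge> 1 \<Longrightarrow> 0 \<le> D k \<and> D k \<le> Bq"
  shows "(\<Sum>k=1..T. (D k - D (Suc k)) * h k) \<le> Bq * h T - D (Suc T) * h T"
proof (induction T)
  case 0
  have "0 \<le> (Bq - D 1) * h 0" using Db[of 1] h0 by simp
  then show ?case by (simp add: algebra_simps)
next
  case (Suc T)
  have "0 \<le> (Bq - D (Suc T)) * (h (Suc T) - h T)"
    using Db[of "Suc T"] hm[of T] by simp
  then show ?case using Suc.IH by (simp add: sum_Suc1 algebra_simps)
qed

lemma reindex_delay: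
  fixes F :: "nat \<Rightarrow> 'b::comm_monoid_add"
  assumes "a \<le> tau"
  shows "(\<Sum>k=1..T. if tau < a + k then F (a + k - tau) else 0) = (\<Sum>s=1..T + a - tau. F s)"
proof (induction T)
  case 0 then show ?case using assms by simp
next
  case (Suc T)
  show ?case
  proof (cases "tau < a + Suc T")
    case True
    then have "Suc T + a - tau = Suc (T + a - tau)" by simp
    then show ?thesis using Suc.IH True by (simp add: sum_Suc1 add.commute)
  next
    case False
    then have "Suc T + a - tau = 0" "T + a - tau = 0" by auto
    then show ?thesis using Suc.IH False by (simp add: sum_Suc1)
  qed
qed

lemma move_bound:
  fixes x :: "nat \<Rightarrow> 'a::real_normed_vector"
  shows "norm (x s - x (s + tau)) \<le> (\<Sum>j<tau. norm (x (s + j + 1) - x (s + j)))"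
proof (induction tau)
  case 0 then show ?case by simp
next
  case (Suc tau)
  have "norm (x s - x (s + Suc tau)) \<le> norm (x s - x (s + tau)) + norm (x (s + tau + 1) - x (s + tau))"
    using norm_triangle_ineq4[of "x s - x (s + tau)" "x (s + tau + 1) - x (s + tau)"]
    by (simp add: algebra_simps norm_minus_commute)
  then show ?case using Suc.IH by simp
qed

lemma jensen_sq:
  fixes w l :: "'i \<Rightarrow> real"
  assumes "finite W" "\<And>m. m \<in> W \<Longrightarrow> w m \<ge> 0" "sum w W = 1"
  shows "(\<Sum>m\<in>W. w m * l m)^2 \<le> (\<Sum>m\<in>W. w m * (l m)^2)"
proof -
  define S where "S = (\<Sum>m\<in>W. w m * l m)"
  have "0 \<le> (\<Sum>m\<in>W. w m * (l m - S)^2)" using assms by (intro sum_nonneg) auto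
  also have "\<dots> = (\<Sum>m\<in>W. w m * (l m)^2 - 2 * S * (w m * l m) + S^2 * w m)"
    by (intro sum.cong) (auto simp: power2_eq_square algebra_simps)
  also have "\<dots> = (\<Sum>m\<in>W. w m * (l m)^2) - 2 * S * S + S^2 * sum w W"
    by (simp add: sum.distrib sum_subtractf sum_distrib_left S_def)
  finally show ?thesis using assms(3) by (simp add: S_def power2_eq_square)
qed

lemma sum_shift:
  fixes a T :: nat
  shows "(\<Sum>t=1..a+T. f t) = (\<Sum>t=1..a. f t) + (\<Sum>k=1..T. (f (a + k) :: 'b::comm_monoid_add))"
proof (induction T)
  case 0 then show ?case by simp
next
  case (Suc T)
  have "(\<Sum>t=1..a + Suc T. f t) = (\<Sum>t=1..Suc (a + T). f t)" by simp
  also have "\<dots> = (\<Sum>t=1..a+T. f t) + f (Suc (a + T))" by (rule sum_Suc1)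
  also have "\<dots> = (\<Sum>t=1..a. f t) + ((\<Sum>k=1..T. f (a + k)) + f (a + Suc T))"
    using Suc.IH by (simp add: add.assoc)
  also have "(\<Sum>k=1..T. f (a + k)) + f (a + Suc T) = (\<Sum>k=1..Suc T. f (a + k))"
    by (rule sum_Suc1[symmetric])
  finally show ?case .
qed



lemma agent_bound:
  fixes Xs :: "'a::euclidean_space set"
    and f :: "'i \<Rightarrow> nat \<Rightarrow> 'a \<Rightarrow> real" and g :: "'i \<Rightarrow> nat \<Rightarrow> 'a \<Rightarrow> 'a"
    and L wn :: "'i \<Rightarrow> real" and tn :: "'i \<Rightarrow> nat" and x :: "nat \<Rightarrow> 'a" and u :: 'a
    and W :: "'i set" and B c :: real and T :: nat
  assumes cl: "closed Xs" and cv: "convex Xs" and bd: "bounded Xs" and B_def: "B = diameter Xs"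
    and f_convex: "\<And>m t. t \<ge> 1 \<Longrightarrow> convex_on Xs (f m t)"
    and f_grad: "\<And>m t y. t \<ge> 1 \<Longrightarrow> y \<in> Xs \<Longrightarrow> (f m t has_derivative (\<lambda>h. g m t y \<bullet> h)) (at y)"
    and gb: "\<And>m t y. t \<ge> 1 \<Longrightarrow> y \<in> Xs \<Longrightarrow> norm (g m t y) \<le> L m"
    and Lpos: "\<And>m. L m > 0"
    and finW: "finite W" and Wne: "W \<noteq> {}" and wpos: "\<And>m. m \<in> W \<Longrightarrow> wn m \<ge> 0"
    and wsum: "sum wn W = 1"
    and cpos: "c > 0" and x1: "x 1 \<in> Xs" and uX: "u \<in> Xs"
    and step: "\<And>t. t \<ge> 1 \<Longrightarrow> x (t + 1) = closest_point Xs
         (x t - (c / sqrt (real t - real (Min (tn ` W)))) *\<^sub>R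
            (\<Sum>m\<in>W. wn m *\<^sub>R (if t > tn m then g m (t - tn m) (x (t - tn m)) else 0)))"
  shows "(\<Sum>t=1..T. \<Sum>m\<in>W. wn m * f m t (x t)) - (\<Sum>t=1..T. \<Sum>m\<in>W. wn m * f m t u)
     \<le> 2 * c * (Max ((\<lambda>m. wn m * L m) ` W) / 2 * (\<Sum>m\<in>W. L m)
           + real (card W) * (Max ((\<lambda>m. wn m * L m) ` W))\<^sup>2 * (\<Sum>m\<in>W. real (tn m))) * sqrt (real T)
       + B\<^sup>2 / (2 * c) * sqrt (real T)
       + real (Max (tn ` W) - Min (tn ` W)) / 2 *
           (Max ((\<lambda>m. wn m * L m) ` W) * (\<Sum>m\<in>W. L m) + real (card W) * B\<^sup>2)"
proof -
  define a where "a = Min (tn ` W)"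
  define b where "b = Max (tn ` W)"
  define K where "K = Max ((\<lambda>m. wn m * L m) ` W)"
  define SL where "SL = (\<Sum>m\<in>W. L m)"
  define S where "S = (\<Sum>m\<in>W. wn m * L m)"
  define \<gamma> where "\<gamma> = (\<lambda>m s. g m s (x s))"
  define d where "d = (\<lambda>t. \<Sum>m\<in>W. wn m *\<^sub>R (if tn m < t then \<gamma> m (t - tn m) else 0))"
  define \<eta> where "\<eta> = (\<lambda>t::nat. c / sqrt (real t - real a))"
  define \<eta>p where "\<eta>p = (\<lambda>t::nat. if a < t then c / sqrt (real t - real a) else 0)"
  define D where "D = (\<lambda>t. (norm (x t - u))\<^sup>2)"
  have Xne: "Xs \<noteq> {}" using uX by auto
  have step': "x (Suc t) = closest_point Xs (x t - \<eta> t *\<^sub>R d t)" if "t \<ge> 1" for t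
    unfolding \<eta>_def d_def \<gamma>_def a_def using step[OF that] by simp
  have a_le: "a \<le> tn m" if "m \<in> W" for m using finW that by (simp add: a_def)
  have le_b: "tn m \<le> b" if "m \<in> W" for m using finW that by (simp add: b_def)
  have wK: "wn m * L m \<le> K" if "m \<in> W" for m using finW that by (simp add: K_def)
  have K0: "0 \<le> K"
  proof -
    obtain m where m: "m \<in> W" using Wne by auto
    have "0 \<le> wn m * L m" using wpos[OF m] Lpos[of m] by simp
    then show ?thesis using wK[OF m] by linarith
  qed
  have w1: "wn m \<le> 1" if m: "m \<in> W" for m
    using member_le_sum[of m W wn] wpos finW wsum m by simp
  have xX: "x t \<in> Xs" if "t \<ge> 1" for t
    using that
  proof (induction t rule: nat_induct_at_least)
    case base then show ?case using x1 by simp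
  next
    case (Suc n) show ?case using step'[OF Suc.hyps(1)] closest_point_in_set[OF cl Xne] by simp
  qed
  have B0: "0 \<le> B" using diameter_bounded_bound[OF bd uX uX] B_def by simp
  have distB: "norm (y - z) \<le> B" if "y \<in> Xs" "z \<in> Xs" for y z
    using diameter_bounded_bound[OF bd that] B_def by (simp add: dist_norm)
  have \<gamma>b: "norm (\<gamma> m s) \<le> L m" if "s \<ge> 1" for m s using gb xX that by (simp add: \<gamma>_def)
  have dS: "norm (d t) \<le> S" for t
  proof -
    have "norm (d t) \<le> (\<Sum>m\<in>W. norm (wn m *\<^sub>R (if tn m < t then \<gamma> m (t - tn m) else 0)))"
      unfolding d_def by (rule norm_sum)
    also have "\<dots> \<le> (\<Sum>m\<in>W. wn m * L m)"
    proof (rule sum_mono)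
      fix m assume m: "m \<in> W"
      have "norm (if tn m < t then \<gamma> m (t - tn m) else 0) \<le> L m"
        using \<gamma>b[of "t - tn m" m] Lpos[of m] by auto
      then show "norm (wn m *\<^sub>R (if tn m < t then \<gamma> m (t - tn m) else 0)) \<le> wn m * L m"
        using wpos[OF m] by (simp add: mult_left_mono)
    qed
    finally show ?thesis by (simp add: S_def)
  qed
  have S0: "0 \<le> S" unfolding S_def using wpos Lpos by (intro sum_nonneg) (simp add: less_imp_le)
  have SK: "S \<le> real (card W) * K"
    unfolding S_def using sum_bounded_above[of W "\<lambda>m. wn m * L m" K] wK by simp
  have S2: "S\<^sup>2 \<le> K * SL"
  proof -
    have "S\<^sup>2 \<le> (\<Sum>m\<in>W. wn m * (L m)\<^sup>2)" unfolding S_def by (rule jensen_sq[OF finW wpos wsum])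
    also have "\<dots> \<le> (\<Sum>m\<in>W. K * L m)"
    proof (rule sum_mono)
      fix m assume m: "m \<in> W"
      have "(wn m * L m) * L m \<le> K * L m" using wK[OF m] Lpos[of m] by (simp add: mult_right_mono)
      then show "wn m * (L m)\<^sup>2 \<le> K * L m" by (simp add: power2_eq_square mult.assoc)
    qed
    also have "\<dots> = K * SL" by (simp add: SL_def sum_distrib_left)
    finally show ?thesis .
  qed
  have d2: "(norm (d t))\<^sup>2 \<le> K * SL" for t
    using power_mono[OF dS[of t] norm_ge_zero, of 2] S2 by linarith
  have d0: "d t = 0" if ta: "t \<le> a" for t
    unfolding d_def
  proof (intro sum.neutral ballI)
    fix m assume "m \<in> W"
    then have "\<not> tn m < t" using a_le[of m] ta by simp
    then show "wn m *\<^sub>R (if tn m < t then \<gamma> m (t - tn m) else 0) = 0" by simp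
  qed
  have \<eta>p0: "0 \<le> \<eta>p t" for t using cpos by (simp add: \<eta>p_def)
  have mv: "norm (x (Suc t) - x t) \<le> \<eta>p t * S" if t1: "t \<ge> 1" for t
  proof (cases "a < t")
    case True
    have e: "\<eta> t > 0" using True cpos by (simp add: \<eta>_def)
    have "norm (x (Suc t) - x t) = dist (closest_point Xs (x t - \<eta> t *\<^sub>R d t)) (closest_point Xs (x t))"
      using step'[OF t1] closest_point_self[OF xX[OF t1]] by (simp add: dist_norm)
    also have "\<dots> \<le> dist (x t - \<eta> t *\<^sub>R d t) (x t)" by (rule closest_point_lipschitz[OF cv cl Xne])
    also have "\<dots> = \<eta> t * norm (d t)" using e by (simp add: dist_norm)
    also have "\<dots> \<le> \<eta> t * S" using dS e by (simp add: mult_left_mono)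
    finally show ?thesis using True by (simp add: \<eta>p_def \<eta>_def)
  next
    case False
    then have "d t = 0" using d0 by simp
    then have "x (Suc t) = x t" using step'[OF t1] closest_point_self[OF xX[OF t1]] by simp
    then show ?thesis using \<eta>p0[of t] S0 by simp
  qed
  have ogd: "d t \<bullet> (x t - u) \<le> (D t - D (Suc t)) * (sqrt (real (t - a)) / (2 * c)) + \<eta>p t * (K * SL / 2)"
    if at: "a < t" for t
  proof -
    have t1: "t \<ge> 1" using at by simp
    define e where "e = \<eta> t"
    define r where "r = sqrt (real (t - a))"
    have rn: "real (t - a) = real t - real a" using at by (intro of_nat_diff) simp
    have sq: "sqrt (real t - real a) = r" by (simp only: r_def rn)
    have spos: "r > 0" using at by (simp add: r_def)
    have e_eq: "e = c / r" by (simp only: e_def \<eta>_def sq)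
    have e0: "e > 0" using e_eq spos cpos by simp
    have ep: "\<eta>p t = e" using at by (simp only: \<eta>p_def if_True sq e_eq)
    have "norm (x (Suc t) - u) = dist (closest_point Xs (x t - e *\<^sub>R d t)) (closest_point Xs u)"
      by (simp only: step'[OF t1] closest_point_self[OF uX] e_def dist_norm)
    also have "\<dots> \<le> dist (x t - e *\<^sub>R d t) u" by (rule closest_point_lipschitz[OF cv cl Xne])
    also have "\<dots> = norm ((x t - u) - e *\<^sub>R d t)" by (simp add: dist_norm algebra_simps)
    finally have n1: "norm (x (Suc t) - u) \<le> norm ((x t - u) - e *\<^sub>R d t)" .
    have "D (Suc t) \<le> (norm ((x t - u) - e *\<^sub>R d t))\<^sup>2" unfolding D_def
      by (rule power_mono[OF n1 norm_ge_zero])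
    also have "(norm ((x t - u) - e *\<^sub>R d t))\<^sup>2 = D t - 2 * e * (d t \<bullet> (x t - u)) + e\<^sup>2 * (norm (d t))\<^sup>2"
      unfolding D_def power2_norm_eq_inner
      by (simp add: inner_diff_left inner_diff_right inner_commute power2_eq_square algebra_simps)
    finally have i1: "2 * e * (d t \<bullet> (x t - u)) \<le> D t - D (Suc t) + e\<^sup>2 * (norm (d t))\<^sup>2" by simp
    have i2: "e * (norm (d t))\<^sup>2 \<le> e * (K * SL)" by (rule mult_left_mono[OF d2]) (use e0 in simp)
    have i3: "2 * e * (d t \<bullet> (x t - u)) \<le> 2 * e * ((D t - D (Suc t)) * (r / (2 * c)) + e * (K * SL / 2))"
    proof -
      have f1: "2 * e * ((D t - D (Suc t)) * (r / (2 * c))) = D t - D (Suc t)"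
        using spos cpos by (simp add: e_eq field_simps)
      have f2: "2 * e * (e * (K * SL / 2)) = e * (e * (K * SL))" by (simp add: algebra_simps)
      have f3: "e\<^sup>2 * (norm (d t))\<^sup>2 = e * (e * (norm (d t))\<^sup>2)" by (simp add: power2_eq_square algebra_simps)
      have f4: "e * (e * (norm (d t))\<^sup>2) \<le> e * (e * (K * SL))" using i2 e0 by (simp add: mult_left_mono)
      have A: "2 * e * ((D t - D (Suc t)) * (r / (2 * c)) + e * (K * SL / 2)) = (D t - D (Suc t)) + e * (e * (K * SL))"
        by (simp only: distrib_left f1 f2)
      show ?thesis unfolding A using i1 f3 f4 by linarith
    qed
    have "d t \<bullet> (x t - u) \<le> (D t - D (Suc t)) * (r / (2 * c)) + e * (K * SL / 2)"
      using i3 e0 by simp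
    then show ?thesis by (simp only: ep r_def)
  qed
  have Dk: "0 \<le> D t \<and> D t \<le> B\<^sup>2" if "t \<ge> 1" for t
  proof -
    have "norm (x t - u) \<le> B" using distB[OF xX[OF that] uX] .
    then have "(norm (x t - u))\<^sup>2 \<le> B\<^sup>2" by (rule power_mono) simp
    then show ?thesis by (simp add: D_def)
  qed
  have etasum: "(\<Sum>t=1..N. \<eta>p t) \<le> 2 * c * sqrt (real (N - a))" for N
    unfolding \<eta>p_def by (rule eta_sum) (use cpos in simp)
  have ogd_sum: "(\<Sum>k=1..T. d (a+k) \<bullet> (x (a+k) - u)) \<le> B\<^sup>2 / (2*c) * sqrt (real T) + c * K * SL * sqrt (real T)"
  proof -
    define h where "h = (\<lambda>k::nat. sqrt (real k) / (2*c))"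
    define D' where "D' = (\<lambda>k. D (a + k))"
    have o1: "(\<Sum>k=1..T. d (a+k) \<bullet> (x (a+k) - u)) \<le> (\<Sum>k=1..T. (D' k - D' (Suc k)) * h k + \<eta>p (a+k) * (K * SL / 2))"
    proof (rule sum_mono)
      fix k assume k: "k \<in> {1..T}"
      have "a < a + k" using k by simp
      from ogd[OF this] show "d (a+k) \<bullet> (x (a+k) - u) \<le> (D' k - D' (Suc k)) * h k + \<eta>p (a+k) * (K * SL / 2)"
        by (simp add: D'_def h_def)
    qed
    have o2: "(\<Sum>k=1..T. (D' k - D' (Suc k)) * h k + \<eta>p (a+k) * (K * SL / 2)) = (\<Sum>k=1..T. (D' k - D' (Suc k)) * h k) + (\<Sum>k=1..T. \<eta>p (a+k)) * (K * SL / 2)"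
      by (simp add: sum.distrib sum_distrib_right)
    have o3: "(\<Sum>k=1..T. (D' k - D' (Suc k)) * h k) \<le> B\<^sup>2 * h T - D' (Suc T) * h T"
    proof (rule telescope)
      show "h k \<le> h (Suc k)" for k using cpos by (simp add: h_def divide_right_mono)
      show "0 \<le> h 0" by (simp add: h_def)
      show "0 \<le> D' k \<and> D' k \<le> B\<^sup>2" if "k \<ge> 1" for k using Dk[of "a+k"] that by (simp add: D'_def)
    qed
    have o4: "B\<^sup>2 * h T - D' (Suc T) * h T \<le> B\<^sup>2 / (2*c) * sqrt (real T)"
    proof -
      have "0 \<le> D' (Suc T) * h T" using Dk[of "a + Suc T"] cpos by (simp add: D'_def h_def)
      then show ?thesis by (simp add: h_def)
    qed
    have o5: "(\<Sum>k=1..T. \<eta>p (a+k)) \<le> 2 * c * sqrt (real T)"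
    proof -
      have "(\<Sum>k=1..T. \<eta>p (a+k)) \<le> (\<Sum>t=1..a. \<eta>p t) + (\<Sum>k=1..T. \<eta>p (a+k))"
        using \<eta>p0 by (simp add: sum_nonneg)
      also have "\<dots> = (\<Sum>t=1..a+T. \<eta>p t)" by (rule sum_shift[symmetric])
      also have "\<dots> \<le> 2 * c * sqrt (real (a + T - a))" by (rule etasum)
      finally show ?thesis by simp
    qed
    have KS0: "0 \<le> K * SL / 2" using K0 Lpos by (simp add: SL_def sum_nonneg less_imp_le)
    have o6: "(\<Sum>k=1..T. \<eta>p (a+k)) * (K * SL / 2) \<le> (2 * c * sqrt (real T)) * (K * SL / 2)"
      by (rule mult_right_mono[OF o5 KS0])
    have o7: "(2 * c * sqrt (real T)) * (K * SL / 2) = c * K * SL * sqrt (real T)" by simp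
    show ?thesis using o1 o2 o3 o4 o6 o7 by linarith
  qed
  have reid: "(\<Sum>k=1..T. d (a+k) \<bullet> (x (a+k) - u)) = (\<Sum>m\<in>W. \<Sum>s=1..T+a-tn m. wn m * (\<gamma> m s \<bullet> (x (s + tn m) - u)))"
  proof -
    have "(\<Sum>k=1..T. d (a+k) \<bullet> (x (a+k) - u)) = (\<Sum>k=1..T. \<Sum>m\<in>W. (if tn m < a+k then wn m * (\<gamma> m (a+k-tn m) \<bullet> (x (a+k-tn m + tn m) - u)) else 0))"
    proof (rule sum.cong[OF refl])
      fix k
      show "d (a+k) \<bullet> (x (a+k) - u) = (\<Sum>m\<in>W. (if tn m < a+k then wn m * (\<gamma> m (a+k-tn m) \<bullet> (x (a+k-tn m + tn m) - u)) else 0))"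
        unfolding d_def inner_sum_left
      proof (rule sum.cong[OF refl])
        fix m
        show "(wn m *\<^sub>R (if tn m < a + k then \<gamma> m (a + k - tn m) else 0)) \<bullet> (x (a + k) - u) =
          (if tn m < a+k then wn m * (\<gamma> m (a+k-tn m) \<bullet> (x (a+k-tn m + tn m) - u)) else 0)"
          by (cases "tn m < a + k") auto
      qed
    qed
    also have "\<dots> = (\<Sum>m\<in>W. \<Sum>k=1..T. (if tn m < a+k then wn m * (\<gamma> m (a+k-tn m) \<bullet> (x (a+k-tn m + tn m) - u)) else 0))"
      by (rule sum.swap)
    also have "\<dots> = (\<Sum>m\<in>W. \<Sum>s=1..T+a-tn m. wn m * (\<gamma> m s \<bullet> (x (s + tn m) - u)))"
    proof (rule sum.cong[OF refl])
      fix m assume m: "m \<in> W"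
      show "(\<Sum>k=1..T. (if tn m < a+k then wn m * (\<gamma> m (a+k-tn m) \<bullet> (x (a+k-tn m + tn m) - u)) else 0))
          = (\<Sum>s=1..T+a-tn m. wn m * (\<gamma> m s \<bullet> (x (s + tn m) - u)))"
        by (rule reindex_delay[where F="\<lambda>s. wn m * (\<gamma> m s \<bullet> (x (s + tn m) - u))", OF a_le[OF m]])
    qed
    finally show ?thesis .
  qed
  have SL0: "0 \<le> SL" using Lpos by (simp add: SL_def sum_nonneg less_imp_le)
  have perm: "(\<Sum>s=1..T. wn m * (f m s (x s) - f m s u)) \<le> (\<Sum>s=1..T+a-tn m. wn m * (\<gamma> m s \<bullet> (x (s + tn m) - u))) + K * S * real (tn m) * (2*c* sqrt (real T)) + real (b - a) * (wn m * L m * B)"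
    if m: "m \<in> W" for m
  proof -
    define M where "M = T + a - tn m"
    define F where "F = (\<lambda>s. wn m * (\<gamma> m s \<bullet> (x s - u)))"
    have MT: "M \<le> T" using a_le[OF m] by (simp add: M_def)
    have p1: "(\<Sum>s=1..T. wn m * (f m s (x s) - f m s u)) \<le> (\<Sum>s=1..T. F s)"
    proof (rule sum_mono)
      fix s assume s: "s \<in> {1..T}"
      then have s1: "s \<ge> 1" by simp
      have "f m s (x s) - f m s u \<le> \<gamma> m s \<bullet> (x s - u)"
        unfolding \<gamma>_def by (rule convex_grad_ineq[OF f_convex[OF s1] xX[OF s1] uX f_grad[OF s1 xX[OF s1]]])
      then show "wn m * (f m s (x s) - f m s u) \<le> F s" unfolding F_def using wpos[OF m] by (rule mult_left_mono)
    qed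
    have p2: "(\<Sum>s=1..T. F s) = (\<Sum>s=1..M. F s) + (\<Sum>s=M+1..T. F s)"
      using sum.ub_add_nat[of 1 M F "T - M"] MT by simp
    have p3: "(\<Sum>s=1..M. F s) = (\<Sum>s=1..M. wn m * (\<gamma> m s \<bullet> (x (s + tn m) - u))) + (\<Sum>s=1..M. wn m * (\<gamma> m s \<bullet> (x s - x (s + tn m))))"
      unfolding F_def sum.distrib[symmetric] by (intro sum.cong refl) (simp add: inner_diff_right algebra_simps)
    have drift: "(\<Sum>s=1..M. wn m * (\<gamma> m s \<bullet> (x s - x (s + tn m)))) \<le> K * S * real (tn m) * (2*c* sqrt (real T))"
    proof -
      have "(\<Sum>s=1..M. wn m * (\<gamma> m s \<bullet> (x s - x (s + tn m)))) \<le> (\<Sum>s=1..M. K * (\<Sum>j<tn m. \<eta>p (s + j) * S))"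
      proof (rule sum_mono)
        fix s assume s: "s \<in> {1..M}"
        then have s1: "s \<ge> 1" by simp
        have "\<gamma> m s \<bullet> (x s - x (s + tn m)) \<le> norm (\<gamma> m s) * norm (x s - x (s + tn m))" by (rule norm_cauchy_schwarz)
        also have "\<dots> \<le> L m * norm (x s - x (s + tn m))" by (rule mult_right_mono[OF \<gamma>b[OF s1] norm_ge_zero])
        finally have q1: "\<gamma> m s \<bullet> (x s - x (s + tn m)) \<le> L m * norm (x s - x (s + tn m))" .
        have "wn m * (\<gamma> m s \<bullet> (x s - x (s + tn m))) \<le> wn m * (L m * norm (x s - x (s + tn m)))"
          using q1 wpos[OF m] by (rule mult_left_mono)
        also have "\<dots> = (wn m * L m) * norm (x s - x (s + tn m))" by simp
        also have "\<dots> \<le> K * norm (x s - x (s + tn m))" by (rule mult_right_mono[OF wK[OF m] norm_ge_zero])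
        also have "\<dots> \<le> K * (\<Sum>j<tn m. \<eta>p (s + j) * S)"
        proof (rule mult_left_mono[OF _ K0])
          have "norm (x s - x (s + tn m)) \<le> (\<Sum>j<tn m. norm (x (s + j + 1) - x (s + j)))" by (rule move_bound)
          also have "\<dots> \<le> (\<Sum>j<tn m. \<eta>p (s + j) * S)"
          proof (rule sum_mono)
            fix j assume "j \<in> {..<tn m}"
            have "s + j \<ge> 1" using s1 by simp
            from mv[OF this] show "norm (x (s + j + 1) - x (s + j)) \<le> \<eta>p (s + j) * S" by simp
          qed
          finally show "norm (x s - x (s + tn m)) \<le> (\<Sum>j<tn m. \<eta>p (s + j) * S)" .
        qed
        finally show "wn m * (\<gamma> m s \<bullet> (x s - x (s + tn m))) \<le> K * (\<Sum>j<tn m. \<eta>p (s + j) * S)" .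
      qed
      also have "\<dots> = K * S * (\<Sum>j<tn m. \<Sum>s=1..M. \<eta>p (s + j))"
      proof -
        have "(\<Sum>s=1..M. K * (\<Sum>j<tn m. \<eta>p (s + j) * S)) = K * S * (\<Sum>s=1..M. \<Sum>j<tn m. \<eta>p (s + j))"
          by (simp add: sum_distrib_left sum_distrib_right mult.commute mult.left_commute mult.assoc)
        also have "(\<Sum>s=1..M. \<Sum>j<tn m. \<eta>p (s + j)) = (\<Sum>j<tn m. \<Sum>s=1..M. \<eta>p (s + j))" by (rule sum.swap)
        finally show ?thesis .
      qed
      also have "\<dots> \<le> K * S * (\<Sum>j<tn m. 2*c* sqrt (real T))"
      proof (rule mult_left_mono[OF sum_mono])
        fix j assume j: "j \<in> {..<tn m}"
        show "(\<Sum>s=1..M. \<eta>p (s + j)) \<le> 2*c* sqrt (real T)"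
        proof (cases "M = 0")
          case True then show ?thesis using cpos by simp
        next
          case False
          then have lt: "tn m < T + a" by (auto simp: M_def)
          have "(\<Sum>s=1..M. \<eta>p (s + j)) \<le> (\<Sum>t=1..j. \<eta>p t) + (\<Sum>s=1..M. \<eta>p (j + s))"
            using \<eta>p0 by (simp add: sum_nonneg add.commute)
          also have "\<dots> = (\<Sum>t=1..j+M. \<eta>p t)" by (rule sum_shift[symmetric])
          also have "\<dots> \<le> 2*c* sqrt (real (j + M - a))" by (rule etasum)
          also have "\<dots> \<le> 2*c* sqrt (real T)"
          proof -
            have "j + M - a \<le> T" using j lt a_le[OF m] by (simp add: M_def)
            then show ?thesis using cpos by simp
          qed
          finally show ?thesis .
        qed
      next
        show "0 \<le> K * S" using K0 S0 by simp
      qed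
      also have "\<dots> = K * S * real (tn m) * (2*c* sqrt (real T))" by simp
      finally show ?thesis .
    qed
    have tail: "(\<Sum>s=M+1..T. F s) \<le> real (b - a) * (wn m * L m * B)"
    proof -
      have "(\<Sum>s=M+1..T. F s) \<le> real (card {M+1..T}) * (wn m * L m * B)"
      proof (rule sum_bounded_above)
        fix s assume s: "s \<in> {M+1..T}"
        then have s1: "s \<ge> 1" by simp
        have "\<gamma> m s \<bullet> (x s - u) \<le> norm (\<gamma> m s) * norm (x s - u)" by (rule norm_cauchy_schwarz)
        also have "\<dots> \<le> L m * B"
          by (rule mult_mono[OF \<gamma>b[OF s1] distB[OF xX[OF s1] uX]]) (use Lpos[of m] in simp_all)
        finally have "\<gamma> m s \<bullet> (x s - u) \<le> L m * B" .
        then have "wn m * (\<gamma> m s \<bullet> (x s - u)) \<le> wn m * (L m * B)" using wpos[OF m] by (rule mult_left_mono)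
        then show "F s \<le> wn m * L m * B" unfolding F_def by (simp add: mult.assoc)
      qed
      also have "\<dots> \<le> real (b - a) * (wn m * L m * B)"
      proof (rule mult_right_mono)
        have "card {M+1..T} = T - M" by simp
        moreover have "T - M \<le> b - a" using a_le[OF m] le_b[OF m] by (simp add: M_def)
        ultimately show "real (card {M+1..T}) \<le> real (b - a)" by simp
        show "0 \<le> wn m * L m * B" using wpos[OF m] Lpos[of m] B0 by simp
      qed
      finally show ?thesis .
    qed
    have "(\<Sum>s=1..T. wn m * (f m s (x s) - f m s u)) \<le> (\<Sum>s=1..M. wn m * (\<gamma> m s \<bullet> (x (s + tn m) - u))) + K * S * real (tn m) * (2*c* sqrt (real T)) + real (b - a) * (wn m * L m * B)"
      using p1 p2 p3 drift tail by linarith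
    then show ?thesis by (simp only: M_def)
  qed
  define ST where "ST = (\<Sum>m\<in>W. real (tn m))"
  define R where "R = (\<lambda>m. \<Sum>s=1..T+a-tn m. wn m * (\<gamma> m s \<bullet> (x (s + tn m) - u)))"
  define Z where "Z = 2 * c * sqrt (real T)"
  have Z0: "0 \<le> Z" using cpos by (simp add: Z_def)
  have fin1: "(\<Sum>t=1..T. \<Sum>m\<in>W. wn m * f m t (x t)) - (\<Sum>t=1..T. \<Sum>m\<in>W. wn m * f m t u)
      = (\<Sum>m\<in>W. \<Sum>t=1..T. wn m * (f m t (x t) - f m t u))"
  proof -
    have "(\<Sum>t=1..T. \<Sum>m\<in>W. wn m * f m t (x t)) - (\<Sum>t=1..T. \<Sum>m\<in>W. wn m * f m t u)
       = (\<Sum>t=1..T. \<Sum>m\<in>W. wn m * (f m t (x t) - f m t u))"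
      by (simp add: sum_subtractf right_diff_distrib)
    also have "\<dots> = (\<Sum>m\<in>W. \<Sum>t=1..T. wn m * (f m t (x t) - f m t u))" by (rule sum.swap)
    finally show ?thesis .
  qed
  have fin2: "(\<Sum>m\<in>W. \<Sum>t=1..T. wn m * (f m t (x t) - f m t u))
      \<le> (\<Sum>m\<in>W. R m + K * S * real (tn m) * Z + real (b - a) * (wn m * L m * B))"
    by (rule sum_mono) (use perm in \<open>simp add: R_def Z_def\<close>)
  have fin3: "(\<Sum>m\<in>W. R m + K * S * real (tn m) * Z + real (b - a) * (wn m * L m * B))
      = (\<Sum>m\<in>W. R m) + K * S * ST * Z + real (b - a) * (\<Sum>m\<in>W. wn m * L m * B)"
    by (simp add: sum.distrib ST_def sum_distrib_left sum_distrib_right mult.assoc)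
  have fin4: "(\<Sum>m\<in>W. wn m * L m * B) \<le> (K * SL + real (card W) * B\<^sup>2) / 2"
  proof -
    have "(\<Sum>m\<in>W. wn m * L m * B) \<le> (\<Sum>m\<in>W. (K * L m + B\<^sup>2) / 2)"
    proof (rule sum_mono)
      fix m assume m: "m \<in> W"
      have "0 \<le> wn m * (L m - B)\<^sup>2" using wpos[OF m] by simp
      then have h1: "2 * (wn m * L m * B) \<le> wn m * (L m)\<^sup>2 + wn m * B\<^sup>2"
        by (simp add: power2_eq_square algebra_simps)
      have h2: "wn m * (L m)\<^sup>2 \<le> K * L m"
      proof -
        have "(wn m * L m) * L m \<le> K * L m" using wK[OF m] Lpos[of m] by (simp add: mult_right_mono)
        then show ?thesis by (simp add: power2_eq_square mult.assoc)
      qed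
      have h3: "wn m * B\<^sup>2 \<le> B\<^sup>2" using mult_right_mono[OF w1[OF m], of "B\<^sup>2"] by simp
      have "2 * (wn m * L m * B) \<le> K * L m + B\<^sup>2" using h1 h2 h3 by linarith
      then show "wn m * L m * B \<le> (K * L m + B\<^sup>2) / 2" by simp
    qed
    also have "\<dots> = (K * SL + real (card W) * B\<^sup>2) / 2"
      by (simp add: SL_def sum_divide_distrib[symmetric] sum.distrib sum_distrib_left)
    finally show ?thesis .
  qed
  have fin5: "K * S * ST * Z \<le> real (card W) * K\<^sup>2 * ST * Z"
  proof -
    have ST0: "0 \<le> ST" by (simp add: ST_def sum_nonneg)
    have "K * S \<le> K * (real (card W) * K)" by (rule mult_left_mono[OF SK K0])
    then have "(K * S) * (ST * Z) \<le> (K * (real (card W) * K)) * (ST * Z)"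
      by (rule mult_right_mono) (use ST0 Z0 in simp)
    then show ?thesis by (simp add: power2_eq_square algebra_simps)
  qed
  have fin6: "real (b - a) * (\<Sum>m\<in>W. wn m * L m * B) \<le> real (b - a) * ((K * SL + real (card W) * B\<^sup>2) / 2)"
    by (rule mult_left_mono[OF fin4]) simp
  have fin7: "(\<Sum>m\<in>W. R m) \<le> B\<^sup>2 / (2*c) * sqrt (real T) + c * K * SL * sqrt (real T)"
    using ogd_sum reid by (simp add: R_def)
  have fin8: "2 * c * (K / 2 * SL + real (card W) * K\<^sup>2 * ST) * sqrt (real T)
      = c * K * SL * sqrt (real T) + real (card W) * K\<^sup>2 * ST * Z"
    by (simp add: Z_def algebra_simps)
  have fin9: "real (b - a) / 2 * (K * SL + real (card W) * B\<^sup>2) = real (b - a) * ((K * SL + real (card W) * B\<^sup>2) / 2)"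
    by simp
  have "(\<Sum>t=1..T. \<Sum>m\<in>W. wn m * f m t (x t)) - (\<Sum>t=1..T. \<Sum>m\<in>W. wn m * f m t u)
     \<le> 2 * c * (K / 2 * SL + real (card W) * K\<^sup>2 * ST) * sqrt (real T)
       + B\<^sup>2 / (2 * c) * sqrt (real T)
       + real (b - a) / 2 * (K * SL + real (card W) * B\<^sup>2)"
    using fin1 fin2 fin3 fin5 fin6 fin7 fin8 fin9 by linarith
  then show ?thesis by (simp only: K_def SL_def ST_def a_def b_def)
qed


theorem corollary1:
  fixes Xs :: "(real^'c^'r) set"
    and f :: "'i::finite \<Rightarrow> nat \<Rightarrow> real^'c^'r \<Rightarrow> real"
    and g :: "'i \<Rightarrow> nat \<Rightarrow> real^'c^'r \<Rightarrow> real^'c^'r"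
    and L :: "'i \<Rightarrow> real"
    and w :: "'i \<Rightarrow> 'i \<Rightarrow> real"
    and E :: "('i \<times> 'i) set"
    and V :: "'i \<Rightarrow> 'i set"
    and Tr :: "'i \<Rightarrow> ('i \<times> 'i) set"
    and tau :: "'i \<Rightarrow> 'i \<Rightarrow> nat"
    and X :: "'i \<Rightarrow> nat \<Rightarrow> real^'c^'r"
    and U :: "'i \<Rightarrow> real^'c^'r"
    and B c :: real and T :: nat
  assumes Xs_closed: "closed Xs" and Xs_convex: "convex Xs" and Xs_bounded: "bounded Xs"
    and B_def: "B = diameter Xs"
    and f_convex: "\<And>m t. t \<ge> 1 \<Longrightarrow> convex_on Xs (f m t)"
    and f_grad: "\<And>m t x. t \<ge> 1 \<Longrightarrow> x \<in> Xs \<Longrightarrow>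
                   (f m t has_derivative (\<lambda>h. g m t x \<bullet> h)) (at x)"
    and grad_bound: "\<And>m t x. t \<ge> 1 \<Longrightarrow> x \<in> Xs \<Longrightarrow> norm (g m t x) \<le> L m"
    and L_pos: "\<And>m. L m > 0"
    and w_range: "\<And>n m. 0 \<le> w n m \<and> w n m \<le> 1"
    and w_stoch: "\<And>n. (\<Sum>m\<in>UNIV. w n m) = 1"
    and graph: "undirected_graph E" and conn: "connected_graph E"
    and steiner: "\<And>n. steiner_tree E n (Wset w n) (V n) (Tr n)"
    and tau_def: "\<And>n m. tau n m = 2 * tree_dist (Tr n) n m"
    and c_pos: "c > 0"
    and X_init: "\<And>n. X n 1 \<in> Xs"
    and X_step: "\<And>n t. t \<ge> 1 \<Longrightarrow>
       X n (t + 1) = closest_point Xs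
         (X n t - (c / sqrt (real t - real (tau_min w tau n))) *\<^sub>R
            (\<Sum>m\<in>Wset w n. w n m *\<^sub>R
               (if t > tau n m then g m (t - tau n m) (X n (t - tau n m)) else 0)))"
    and U_mem: "\<And>n. U n \<in> Xs"
    and U_min: "\<And>n Y. Y \<in> Xs \<Longrightarrow> cum_loss w f T n (\<lambda>_. U n) \<le> cum_loss w f T n (\<lambda>_. Y)"
  shows "regret w f T X U \<le>
    (\<Sum>n\<in>UNIV. 2 * c * Q_const w L tau n * sqrt (real T + real (delta_tau w tau n))
              + B\<^sup>2 / (2 * c) * sqrt (real T)
              + P_const w L tau n * c
              + C_const w L tau B n)"
proof -
  have finU: "finite (UNIV :: 'i set)" by simp
  have bound_n: "cum_loss w f T n (X n) - cum_loss w f T n (\<lambda>_. U n)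
      \<le> 2 * c * Q_const w L tau n * sqrt (real T + real (delta_tau w tau n))
              + B\<^sup>2 / (2 * c) * sqrt (real T)
              + P_const w L tau n * c
              + C_const w L tau B n" for n
  proof -
    let ?W = "Wset w n"
    have finW: "finite ?W" by simp
    have wpos: "\<And>m. m \<in> ?W \<Longrightarrow> w n m \<ge> 0" using w_range by simp
    have sumW: "sum (w n) ?W = 1"
    proof -
      have "sum (w n) ?W = sum (w n) UNIV"
        by (rule sum.mono_neutral_left) (use w_range in \<open>auto simp: Wset_def not_less intro: antisym\<close>)
      then show ?thesis using w_stoch by simp
    qed
    have Wne: "?W \<noteq> {}"
    proof
      assume "?W = {}"
      then show False using sumW by simp
    qed
    have stepn: "\<And>t. t \<ge> 1 \<Longrightarrow> X n (t + 1) = closest_point Xs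
         (X n t - (c / sqrt (real t - real (Min (tau n ` ?W)))) *\<^sub>R
            (\<Sum>m\<in>?W. w n m *\<^sub>R (if t > tau n m then g m (t - tau n m) (X n (t - tau n m)) else 0)))"
      using X_step by (simp add: tau_min_def)
    have A: "(\<Sum>t=1..T. \<Sum>m\<in>?W. w n m * f m t (X n t)) - (\<Sum>t=1..T. \<Sum>m\<in>?W. w n m * f m t (U n))
     \<le> 2 * c * (Max ((\<lambda>m. w n m * L m) ` ?W) / 2 * (\<Sum>m\<in>?W. L m)
           + real (card ?W) * (Max ((\<lambda>m. w n m * L m) ` ?W))\<^sup>2 * (\<Sum>m\<in>?W. real (tau n m))) * sqrt (real T)
       + B\<^sup>2 / (2 * c) * sqrt (real T)
       + real (Max (tau n ` ?W) - Min (tau n ` ?W)) / 2 *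
           (Max ((\<lambda>m. w n m * L m) ` ?W) * (\<Sum>m\<in>?W. L m) + real (card ?W) * B\<^sup>2)"
      by (rule agent_bound[OF Xs_closed Xs_convex Xs_bounded B_def f_convex f_grad grad_bound L_pos
            finW Wne wpos sumW c_pos X_init U_mem stepn])
    then have A': "cum_loss w f T n (X n) - cum_loss w f T n (\<lambda>_. U n)
      \<le> 2 * c * Q_const w L tau n * sqrt (real T) + B\<^sup>2 / (2 * c) * sqrt (real T) + C_const w L tau B n"
      by (simp add: cum_loss_def Q_const_def C_const_def K_const_def delta_tau_def tau_max_def tau_min_def)
    have K0: "0 \<le> K_const w L n"
    proof -
      obtain m where m: "m \<in> ?W" using Wne by auto
      have "w n m * L m \<le> K_const w L n" unfolding K_const_def using m finW by simp
      moreover have "0 \<le> w n m * L m" using wpos[OF m] L_pos[of m] by simp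
      ultimately show ?thesis by linarith
    qed
    have Q0: "0 \<le> Q_const w L tau n"
      unfolding Q_const_def using K0 L_pos by (intro add_nonneg_nonneg mult_nonneg_nonneg sum_nonneg) (auto simp: less_imp_le)
    have "2 * c * Q_const w L tau n * sqrt (real T) \<le> 2 * c * Q_const w L tau n * sqrt (real T + real (delta_tau w tau n))"
      by (rule mult_left_mono) (use Q0 c_pos in simp_all)
    moreover have "0 \<le> P_const w L tau n * c" unfolding P_const_def using c_pos by simp
    ultimately show ?thesis using A' by linarith
  qed
  show ?thesis
    unfolding regret_def by (rule sum_mono) (rule bound_n)
qed

end
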